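(* Let $\sigma$ be irrational and $\rho\in\mathbb R$, and let $b[n]=\{\sigma n+\rho\}$ for $n\ge0$, where $\{\cdot\}$ denotes the fractional part. Then $(b[n])_{n\ge0}$ is a canonical sequence (so the permutation it represents is ergodic), and it is a fixed point of the morphism $[0,1]^*\to[0,1]^*$ defined on single numbers by $x\mapsto \{2x-\rho\},\{2x-\rho+\sigma\}$ and extended by concatenation.
   Context: A real sequence $(a[i])_{i\ge0}$ is canonical if its elements are pairwise distinct, lie in $[0,1]$, and for every $t\in[0,1]$, $\#\{0\le k<n: a[j+k]<t\}/n\to t$ as $n\to\infty$ uniformly in $j$. An infinite permutation is an equivalence class of real sequences with pairwise distinct elements under $(a[n])\sim(b[n])$ iff $a[i]<a[j]\Leftrightarrow b[i]<b[j]$ for all $i,j$; it is ergodic if it has a canonical representative. A fixed point of a morphism $\psi$ on sequences of numbers is an infinite sequence $s$ with $\psi(s)=s$, where $\psi$ acts on an infinite sequence by concatenating the images of its terms. *)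

theory Defs
  imports Complex_Main
begin

definition canonical :: "(nat \<Rightarrow> real) \<Rightarrow> bool" where
  "canonical a \<longleftrightarrow>
     inj a \<and> (\<forall>i. a i \<in> {0..1}) \<and>
     (\<forall>t\<in>{0..1}. \<forall>\<epsilon>>0. \<exists>N. \<forall>n\<ge>N. \<forall>j.
        \<bar>real (card {k. k < n \<and> a (j + k) < t}) / real n - t\<bar> < \<epsilon>)"

text \<open>Action of a morphism (given on single letters by a finite word) on an infinite
  sequence: concatenation of the images of its terms.\<close>
definition morph_apply :: "('a \<Rightarrow> 'a list) \<Rightarrow> (nat \<Rightarrow> 'a) \<Rightarrow> (nat \<Rightarrow> 'a)" where
  "morph_apply \<psi> s i =
     (let L = (\<lambda>n. \<Sum>k<n. length (\<psi> (s k)));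
          n = (LEAST n. i < L (Suc n))
      in \<psi> (s n) ! (i - L n))"

definition is_fixed_point :: "('a \<Rightarrow> 'a list) \<Rightarrow> (nat \<Rightarrow> 'a) \<Rightarrow> bool" where
  "is_fixed_point \<psi> s \<longleftrightarrow> morph_apply \<psi> s = s"

end

theory Submission
  imports Defs "HOL-Analysis.Kronecker_Approximation_Theorem"
begin

definition ind :: "real \<Rightarrow> real \<Rightarrow> real" where
  "ind t z = (if frac z < t then 1 else 0)"

lemma ind_ge0: "0 \<le> ind t z" and ind_le1: "ind t z \<le> 1"
  by (auto simp: ind_def)

lemma frac_shift_id:
  assumes "0 \<le> s" "s \<le> 1"
  shows "frac (w - s) = ind s w - s + frac w"
proof (cases "frac w < s")
  case True
  have i: "w - s - (frac w - s + 1) = of_int (floor w - 1)" by (simp add: frac_def)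
  have "frac (w - s) = frac w - s + 1"
    unfolding frac_unique_iff
  proof (intro conjI)
    show "w - s - (frac w - s + 1) \<in> \<int>" unfolding i by simp
  qed (use True assms frac_ge_0[of w] in linarith)+
  then show ?thesis using True by (simp add: ind_def)
next
  case False
  have i: "w - s - (frac w - s) = of_int (floor w)" by (simp add: frac_def)
  have "frac (w - s) = frac w - s"
    unfolding frac_unique_iff
  proof (intro conjI)
    show "w - s - (frac w - s) \<in> \<int>" unfolding i by simp
  qed (use False assms frac_lt_1[of w] in linarith)+
  then show ?thesis using False by (simp add: ind_def)
qed

lemma F_shift1:
  fixes a \<eta> :: real
  shows "\<bar>(\<Sum>i<N. frac (a - \<eta> + real i * \<eta>)) - (\<Sum>i<N. frac (a + real i * \<eta>))\<bar> \<le> 1"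
proof -
  define g where "g i = frac (a + (real i - 1) * \<eta>)" for i :: nat
  have "(\<Sum>i<N. frac (a - \<eta> + real i * \<eta>)) - (\<Sum>i<N. frac (a + real i * \<eta>)) = (\<Sum>i<N. g i - g (Suc i))"
    unfolding sum_subtractf[symmetric] g_def
    by (intro sum.cong refl) (simp add: algebra_simps)
  also have "... = g 0 - g N" by (rule sum_lessThan_telescope')
  finally show ?thesis using frac_ge_0 frac_lt_1 unfolding g_def
    by (smt (verit))
qed

lemma F_shift:
  fixes a \<eta> :: real
  shows "\<bar>(\<Sum>i<N. frac (a - real p * \<eta> + real i * \<eta>)) - (\<Sum>i<N. frac (a + real i * \<eta>))\<bar> \<le> real p"
proof (induction p)
  case 0
  then show ?case by simp
next
  case (Suc p)
  have "\<bar>(\<Sum>i<N. frac ((a - real p * \<eta>) - \<eta> + real i * \<eta>)) - (\<Sum>i<N. frac ((a - real p * \<eta>) + real i * \<eta>))\<bar> \<le> 1"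
    by (rule F_shift1)
  moreover have eq: "a - real (Suc p) * \<eta> = (a - real p * \<eta>) - \<eta>" by (simp add: algebra_simps)
  ultimately show ?case using Suc.IH unfolding eq by linarith
qed

lemma count_small:
  assumes "0 < \<eta>" "r \<le> \<eta>"
  shows "(\<Sum>i<N. ind r (w + real i * \<eta>)) \<le> real N * \<eta> + 1"
proof -
  define G where "G i = real_of_int (floor (w + (real i - 1) * \<eta>))" for i :: nat
  have "ind r (w + real i * \<eta>) \<le> G (Suc i) - G i" for i
  proof -
    define x where "x = w + real i * \<eta>"
    have e: "w + (real i - 1) * \<eta> = x - \<eta>" by (simp add: algebra_simps x_def)
    have e2: "w + (real (Suc i) - 1) * \<eta> = x" by (simp add: algebra_simps x_def)
    have a: "floor (x - \<eta>) \<le> floor x" using assms by (intro floor_mono) auto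
    have b: "floor (x - \<eta>) \<le> floor x - 1" if "frac x < r"
    proof -
      have "x - \<eta> < of_int (floor x)" using that assms by (simp add: frac_def)
      then show ?thesis by (meson floor_less_iff int_one_le_iff_zero_less le_less_trans 
            linorder_not_less zle_diff1_eq) 
    qed
    show ?thesis using a b unfolding ind_def G_def e e2 x_def[symmetric]
      by (auto simp flip: of_int_diff)
  qed
  hence "(\<Sum>i<N. ind r (w + real i * \<eta>)) \<le> (\<Sum>i<N. G (Suc i) - G i)" by (intro sum_mono)
  also have "... = G N - G 0" by (rule sum_lessThan_telescope)
  also have "... \<le> real N * \<eta> + 1"
  proof -
    have "G N \<le> w + (real N - 1) * \<eta>" unfolding G_def by (rule of_int_floor_le)
    moreover have "G 0 > w + (real 0 - 1) * \<eta> - 1" unfolding G_def by linarith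
    ultimately show ?thesis by (simp add: algebra_simps)
  qed
  finally show ?thesis .
qed

lemma progression_bound:
  assumes "0 < \<eta>" "0 \<le> t" "t \<le> 1"
  shows "\<bar>(\<Sum>i<N. ind t (y + real i * \<eta>)) - t * real N\<bar> \<le> 1/\<eta> + 2 * real N * \<eta> + 1"
proof -
  define p where "p = nat (floor (t / \<eta>))"
  define r where "r = t - real p * \<eta>"
  have tp: "t / \<eta> \<ge> 0" using assms by simp
  have pe: "real p = of_int (floor (t / \<eta>))" unfolding p_def using tp by simp
  have p_le: "real p \<le> t / \<eta>" unfolding pe by simp
  have p_gt: "t / \<eta> < real p + 1" unfolding pe by linarith
  have "real p * \<eta> \<le> t" using p_le assms by (simp add: field_simps)
  hence r0: "0 \<le> r" unfolding r_def by simp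
  have "t < (real p + 1) * \<eta>" using p_gt assms by (simp add: field_simps)
  hence r1: "r < \<eta>" unfolding r_def by (simp add: algebra_simps)
  have r_le1: "r \<le> 1" unfolding r_def using assms by (smt (verit) mult_nonneg_nonneg of_nat_0_le_iff)
  have p_le': "real p \<le> 1 / \<eta>" using p_le assms by (smt (verit) divide_right_mono)
  define z where "z i = y + real i * \<eta>" for i :: nat
  define w where "w i = (y - real p * \<eta>) + real i * \<eta>" for i :: nat
  have step: "ind t (z i) - t = ind r (w i) - r + (frac (w i) - frac (z i))" for i
  proof -
    have "z i - t = w i - r" unfolding z_def w_def r_def by simp
    moreover have "frac (z i - t) = ind t (z i) - t + frac (z i)"
      using frac_shift_id assms by simp
    moreover have "frac (w i - r) = ind r (w i) - r + frac (w i)"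
      using frac_shift_id r0 r_le1 by simp
    ultimately show ?thesis by simp
  qed
  have "(\<Sum>i<N. ind t (z i)) - t * real N = (\<Sum>i<N. ind t (z i) - t)"
    by (simp add: sum_subtractf)
  also have "... = (\<Sum>i<N. ind r (w i)) - r * real N + ((\<Sum>i<N. frac (w i)) - (\<Sum>i<N. frac (z i)))"
    unfolding step by (simp add: sum_subtractf sum.distrib)
  finally have eq: "(\<Sum>i<N. ind t (z i)) - t * real N = (\<Sum>i<N. ind r (w i)) - r * real N + ((\<Sum>i<N. frac (w i)) - (\<Sum>i<N. frac (z i)))" .
  have b1: "0 \<le> (\<Sum>i<N. ind r (w i))" by (intro sum_nonneg ind_ge0)
  have b2: "(\<Sum>i<N. ind r (w i)) \<le> real N * \<eta> + 1"
    unfolding w_def using count_small assms r1 by simp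
  have b3: "0 \<le> r * real N" "r * real N \<le> \<eta> * real N" using r0 r1 by (auto intro: mult_right_mono)
  have b4: "\<bar>(\<Sum>i<N. frac (w i)) - (\<Sum>i<N. frac (z i))\<bar> \<le> real p"
    unfolding w_def z_def by (rule F_shift)
  show ?thesis using eq b1 b2 b3 b4 p_le' unfolding z_def by (simp add: algebra_simps)
qed

lemma sum_split_add: "(\<Sum>k<a+b. f k) = (\<Sum>k<a. f k) + (\<Sum>k<b. f (a+k)) "
  for f :: "nat \<Rightarrow> real"
  by (induction b) (simp_all add: add.assoc)

lemma sum_group: "(\<Sum>k<q*M. f k) = (\<Sum>r<q. \<Sum>i<M. f (r + q*i))"
  for f :: "nat \<Rightarrow> real"
proof (induction M)
  case 0
  then show ?case by simp
next
  case (Suc M)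
  have "(\<Sum>k<q*Suc M. f k) = (\<Sum>k<q*M + q. f k)" by (simp add: add.commute)
  also have "... = (\<Sum>k<q*M. f k) + (\<Sum>k<q. f (q*M+k))" by (rule sum_split_add)
  also have "... = (\<Sum>r<q. (\<Sum>i<M. f (r + q*i)) + f (r + q * M))"
    unfolding Suc.IH sum.distrib by (simp add: add.commute)
  finally show ?case by simp
qed

lemma uniform_count:
  assumes irr: "\<sigma> \<notin> \<rat>" and t: "0 \<le> t" "t \<le> 1" and e: "\<epsilon> > 0"
  shows "\<exists>N. \<forall>n\<ge>N. \<forall>x. \<bar>(\<Sum>k<n. ind t (x + real k * \<sigma>)) / real n - t\<bar> < \<epsilon>"
proof -
  define d where "d = min (\<epsilon>/8) (1/2)"
  have d0: "0 < d" "d \<le> 1" "d \<le> \<epsilon>/8" using e by (auto simp: d_def)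
  obtain q where q: "q > 0" "\<bar>frac (real q * \<sigma>) - d\<bar> < d"
    using Kronecker_approx_1_explicit[OF irr, of d d] d0 by auto
  define \<eta> where "\<eta> = frac (real q * \<sigma>)"
  have \<eta>0: "0 < \<eta>" "\<eta> < \<epsilon>/4" using q d0 unfolding \<eta>_def by linarith+
  have q\<sigma>: "real q * \<sigma> = of_int (floor (real q * \<sigma>)) + \<eta>" unfolding \<eta>_def frac_def by simp
  define C where "C = real q / \<eta> + 2 * real q"
  obtain N :: nat where N: "2 * C / \<epsilon> < real N" using reals_Archimedean2 by blast
  have "\<forall>n\<ge>Suc N. \<forall>x. \<bar>(\<Sum>k<n. ind t (x + real k * \<sigma>)) / real n - t\<bar> < \<epsilon>"
  proof (intro allI impI)
    fix n x assume n: "Suc N \<le> n"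
    define g where "g k = ind t (x + real k * \<sigma>)" for k
    define M where "M = n div q"
    define s where "s = n mod q"
    have ns: "n = q * M + s" unfolding M_def s_def by simp
    have sq: "s < q" unfolding s_def using q by simp
    have "(\<Sum>k<n. g k) = (\<Sum>k<q*M. g k) + (\<Sum>k<s. g (q*M+k))"
      unfolding ns by (rule sum_split_add)
    also have "(\<Sum>k<q*M. g k) = (\<Sum>r<q. \<Sum>i<M. ind t ((x + real r * \<sigma>) + real i * \<eta>))"
    proof -
      have "g (r + q*i) = ind t ((x + real r * \<sigma>) + real i * \<eta>)" for r i
      proof -
        have "x + real (r + q*i) * \<sigma> = ((x + real r * \<sigma>) + real i * \<eta>) + of_int (int i * floor (real q * \<sigma>))"
        proof -
          have "real (r + q*i) * \<sigma> = real r * \<sigma> + real i * (real q * \<sigma>)" by (simp add: algebra_simps)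
          also have "... = real r * \<sigma> + real i * (of_int (floor (real q * \<sigma>)) + \<eta>)"
            by (simp only: q\<sigma>[symmetric])
          finally show ?thesis by (simp add: algebra_simps)
        qed
        then show ?thesis by (simp only: g_def ind_def frac_add_of_int_right)
      qed
      then show ?thesis by (simp add: sum_group)
    qed
    finally have split: "(\<Sum>k<n. g k) = (\<Sum>r<q. \<Sum>i<M. ind t ((x + real r * \<sigma>) + real i * \<eta>)) + (\<Sum>k<s. g (q*M+k))" .
    have A: "\<bar>(\<Sum>r<q. \<Sum>i<M. ind t ((x + real r * \<sigma>) + real i * \<eta>)) - t * real (q*M)\<bar>
          \<le> real q * (1/\<eta> + 2 * real M * \<eta> + 1)"
    proof -
      have "\<bar>(\<Sum>r<q. \<Sum>i<M. ind t ((x + real r * \<sigma>) + real i * \<eta>)) - t * real (q*M)\<bar>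
          = \<bar>\<Sum>r<q. ((\<Sum>i<M. ind t ((x + real r * \<sigma>) + real i * \<eta>)) - t * real M)\<bar>"
        by (simp add: sum_subtractf algebra_simps)
      also have "... \<le> (\<Sum>r<q. \<bar>(\<Sum>i<M. ind t ((x + real r * \<sigma>) + real i * \<eta>)) - t * real M\<bar>)"
        by (rule sum_abs)
      also have "... \<le> (\<Sum>r<q. 1/\<eta> + 2 * real M * \<eta> + 1)"
        by (intro sum_mono progression_bound \<eta>0 t)
      finally show ?thesis by simp
    qed
    have B0: "0 \<le> (\<Sum>k<s. g (q*M+k))" unfolding g_def by (intro sum_nonneg ind_ge0)
    have B1: "(\<Sum>k<s. g (q*M+k)) \<le> real s"
      using sum_mono[of "{..<s}" "\<lambda>k. g (q*M+k)" "\<lambda>_. 1"] unfolding g_def by (simp add: ind_le1)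
    have ts: "0 \<le> t * real s" "t * real s \<le> real s" using t by (auto intro: mult_left_le_one_le)
    have qM: "real q * real M * \<eta> \<le> real n * \<eta>"
      using \<eta>0 ns by (intro mult_right_mono) (simp_all flip: of_nat_mult)
    have tot: "\<bar>(\<Sum>k<n. g k) - t * real n\<bar> \<le> C + 2 * real n * \<eta>"
    proof -
      have "real n = real (q*M) + real s" using ns by simp
      hence "(\<Sum>k<n. g k) - t * real n = ((\<Sum>r<q. \<Sum>i<M. ind t ((x + real r * \<sigma>) + real i * \<eta>)) - t * real (q*M))
               + ((\<Sum>k<s. g (q*M+k)) - t * real s)" unfolding split by (simp add: algebra_simps)
      moreover have "real q * (1/\<eta> + 2 * real M * \<eta> + 1) = real q / \<eta> + 2 * (real q * real M * \<eta>) + real q"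
        by (simp add: algebra_simps)
      ultimately show ?thesis using A B0 B1 ts qM sq unfolding C_def by linarith
    qed
    have npos: "real n > 0" using n by simp
    have "\<bar>(\<Sum>k<n. g k) / real n - t\<bar> = \<bar>(\<Sum>k<n. g k) - t * real n\<bar> / real n"
      using npos by (simp add: field_simps)
    also have "... \<le> (C + 2 * real n * \<eta>) / real n"
      using tot npos by (simp add: divide_right_mono)
    also have "... = C / real n + 2 * \<eta>" using npos by (simp add: field_simps)
    also have "... < \<epsilon>"
    proof -
      have "2 * C / \<epsilon> < real n" using N n by linarith
      hence "2 * C < \<epsilon> * real n" using e by (simp add: field_simps)
      hence "C / real n < \<epsilon> / 2" using npos by (simp add: field_simps)
      then show ?thesis using \<eta>0 by linarith
    qed
    finally show "\<bar>(\<Sum>k<n. ind t (x + real k * \<sigma>)) / real n - t\<bar> < \<epsilon>" unfolding g_def .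
  qed
  then show ?thesis by blast
qed

lemma card_sum_ind: "real (card {k. k < n \<and> P k}) = (\<Sum>k<n. if P k then 1 else 0)"
  for n :: nat
proof (induction n)
  case 0
  then show ?case by simp
next
  case (Suc n)
  have "{k. k < Suc n \<and> P k} = (if P n then insert n {k. k < n \<and> P k} else {k. k < n \<and> P k})"
    by (auto simp: less_Suc_eq)
  then show ?case using Suc.IH by simp
qed

lemma fixed_part:
  fixes \<sigma> \<rho> :: real
  defines "b \<equiv> (\<lambda>n::nat. frac (\<sigma> * real n + \<rho>))"
  shows "is_fixed_point (\<lambda>x. [frac (2 * x - \<rho>), frac (2 * x - \<rho> + \<sigma>)]) b"
  unfolding is_fixed_point_def
proof
  fix i :: nat
  define \<psi> where "\<psi> = (\<lambda>x::real. [frac (2 * x - \<rho>), frac (2 * x - \<rho> + \<sigma>)])"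
  have L: "(\<Sum>k<n. length (\<psi> (b k))) = 2 * n" for n by (simp add: \<psi>_def)
  have least: "(LEAST n. i < 2 * Suc n) = i div 2"
    by (rule Least_equality) auto
  have md: "i - 2 * (i div 2) = i mod 2" by (rule minus_mult_div_eq_mod)
  have key: "frac (2 * frac a - \<rho> + c) = frac (2 * a - \<rho> + c)" for a c
  proof -
    have e: "2 * frac a - \<rho> + c = (2 * a - \<rho> + c) + of_int (- 2 * floor a)" by (simp add: frac_def)
    show ?thesis by (simp only: e frac_add_of_int_right)
  qed
  have "morph_apply \<psi> b i = \<psi> (b (i div 2)) ! (i mod 2)"
    unfolding morph_apply_def Let_def L least md ..
  also have "... = b i"
  proof (cases "even i")
    case True
    then obtain m where m: "i = 2 * m" by blast
    have "\<psi> (b (i div 2)) ! (i mod 2) = frac (2 * frac (\<sigma> * real m + \<rho>) - \<rho> + 0)"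
      using m by (simp add: \<psi>_def b_def)
    also have "... = frac (2 * (\<sigma> * real m + \<rho>) - \<rho> + 0)" by (rule key)
    also have "... = b i" using m by (simp add: b_def algebra_simps)
    finally show ?thesis .
  next
    case False
    then obtain m where m: "i = 2 * m + 1" using oddE by blast
    have "\<psi> (b (i div 2)) ! (i mod 2) = frac (2 * frac (\<sigma> * real m + \<rho>) - \<rho> + \<sigma>)"
      using m by (simp add: \<psi>_def b_def)
    also have "... = frac (2 * (\<sigma> * real m + \<rho>) - \<rho> + \<sigma>)" by (rule key)
    also have "... = b i" using m by (simp add: b_def algebra_simps)
    finally show ?thesis .
  qed
  finally show "morph_apply (\<lambda>x. [frac (2 * x - \<rho>), frac (2 * x - \<rho> + \<sigma>)]) b i = b i"
    unfolding \<psi>_def .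
qed

theorem mainTheorem7:
  fixes \<sigma> \<rho> :: real
  assumes "\<sigma> \<notin> \<rat>"
  defines "b \<equiv> (\<lambda>n::nat. frac (\<sigma> * real n + \<rho>))"
  shows "canonical b \<and>
         is_fixed_point (\<lambda>x. [frac (2 * x - \<rho>), frac (2 * x - \<rho> + \<sigma>)]) b"
proof
  show "is_fixed_point (\<lambda>x. [frac (2 * x - \<rho>), frac (2 * x - \<rho> + \<sigma>)]) b"
    unfolding b_def by (rule fixed_part)
  have inj: "inj b"
  proof (rule injI)
    fix m n assume eq: "b m = b n"
    show "m = n"
    proof (rule ccontr)
      assume mn: "m \<noteq> n"
      have "(\<sigma> * real m + \<rho>) - (\<sigma> * real n + \<rho>) = of_int (floor (\<sigma> * real m + \<rho>) - floor (\<sigma> * real n + \<rho>))"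
        using eq unfolding b_def frac_def by simp
      hence "\<sigma> * (real m - real n) = of_int (floor (\<sigma> * real m + \<rho>) - floor (\<sigma> * real n + \<rho>))"
        by (simp add: algebra_simps)
      hence "\<sigma> * (real m - real n) \<in> \<int>" by (metis Ints_of_int)
      hence "\<sigma> * (real m - real n) \<in> \<rat>" using Ints_subset_Rats by blast
      hence q: "\<sigma> * (real m - real n) / (real m - real n) \<in> \<rat>" by (intro Rats_divide) auto
      have "real m - real n \<noteq> 0" using mn by simp
      hence "\<sigma> * (real m - real n) / (real m - real n) = \<sigma>" by simp
      with q show False using assms(1) by simp
    qed
  qed
  have rng: "\<forall>i. b i \<in> {0..1}" unfolding b_def by (auto intro: less_imp_le[OF frac_lt_1])
  have freq: "\<forall>t\<in>{0..1}. \<forall>\<epsilon>>0. \<exists>N. \<forall>n\<ge>N. \<forall>j.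
        \<bar>real (card {k. k < n \<and> b (j + k) < t}) / real n - t\<bar> < \<epsilon>"
  proof (intro ballI allI impI)
    fix t \<epsilon> :: real assume t: "t \<in> {0..1}" and e: "\<epsilon> > 0"
    obtain N where N: "\<forall>n\<ge>N. \<forall>x. \<bar>(\<Sum>k<n. ind t (x + real k * \<sigma>)) / real n - t\<bar> < \<epsilon>"
      using uniform_count[OF assms(1) _ _ e] t by auto
    have "\<forall>n\<ge>N. \<forall>j. \<bar>real (card {k. k < n \<and> b (j + k) < t}) / real n - t\<bar> < \<epsilon>"
    proof (intro allI impI)
      fix n j assume n: "N \<le> n"
      have "real (card {k. k < n \<and> b (j + k) < t}) = (\<Sum>k<n. ind t ((\<sigma> * real j + \<rho>) + real k * \<sigma>))"
        unfolding card_sum_ind ind_def b_def by (simp add: algebra_simps)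
      then show "\<bar>real (card {k. k < n \<and> b (j + k) < t}) / real n - t\<bar> < \<epsilon>" using N n by simp
    qed
    then show "\<exists>N. \<forall>n\<ge>N. \<forall>j. \<bar>real (card {k. k < n \<and> b (j + k) < t}) / real n - t\<bar> < \<epsilon>" by blast
  qed
  show "canonical b" unfolding canonical_def using inj rng freq by blast
qed

end
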